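(* Let $k\ge1$ be fixed and consider the asymptotic regime $n\to\infty$. For $1\le i,j\le n$ let $\mathsf d_{i,j,\mathrm{noisy}}\ge0$ and $\mathsf d_{i,j,\mathrm{clean}}\ge0$ be scalar dissimilarities (possibly random), and suppose there exist $\xi_n\in\mathbb R$ with $$\sup_{i\ne j}\big|\mathsf d^2_{i,j,\mathrm{noisy}}-\mathsf d^2_{i,j,\mathrm{clean}}-\xi_n\big|=o_P(1).$$ For a fixed $\nu>0$ set $\tilde w_{i,j}=\exp(-\mathsf d^2_{i,j,\mathrm{noisy}}/\nu)$, $w_{i,j}=\exp(-\mathsf d^2_{i,j,\mathrm{clean}}/\nu)$, $W=(w_{i,j})$, $\widetilde W=(\tilde w_{i,j})$. Let $G,\widetilde G$ be $nk\times nk$ block matrices with $k\times k$ blocks $G_{i,j},\widetilde G_{i,j}$ (connections between clean, resp. noisy, versions of objects $i$ and $j$). Suppose that there is a constant $C>0$ with $\sup_{i,j}\|G_{i,j}\|_F\le C$, $\sup_{i,j}\|\widetilde G_{i,j}\|_F\le C$, that $\sup_{i,j}\|\widetilde G_{i,j}-G_{i,j}\|_F=o_P(1)$, and that $\inf_i\frac1n\sum_{j\ne i}w_{i,j}>\gamma$ with $\gamma$ bounded below by a positive constant as $n\to\infty$. Then $$\|L(W,G)-L_0(\widetilde W,\widetilde G)\|_{op}=o_P(1).$$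
   Context: For an $n\times n$ matrix $W$ and an $nk\times nk$ block matrix $G$, $S$ is the block matrix with blocks $w_{i,j}G_{i,j}$, $D$ is block diagonal with blocks $(\sum_{j\ne i}w_{i,j})\mathrm I_k$, $L(W,G)=D^{-1}S$, and $L_0(W,G)=L(W\circ1_{i\ne j},G)$, i.e. computed after setting the diagonal weights to $0$. $o_P(1)$ denotes convergence to $0$ in probability as $n\to\infty$. *)

theory Defs
  imports "HOL-Probability.Probability"
begin

text \<open>Block matrices: an nk x nk matrix is represented (for a given n) by its
  k x k blocks B i j, for i, j < n; the block dimension k is the cardinality of
  the finite index type 'k. Values of B outside i, j < n are irrelevant.\<close>

definition frob :: "real^'k^'k \<Rightarrow> real" where
  "frob A = sqrt (\<Sum>i\<in>UNIV. \<Sum>j\<in>UNIV. (A $ i $ j)\<^sup>2)"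

definition bvec_norm :: "nat \<Rightarrow> (nat \<Rightarrow> real^'k) \<Rightarrow> real" where
  "bvec_norm n x = sqrt (\<Sum>i<n. (norm (x i))\<^sup>2)"

definition bmat_apply :: "nat \<Rightarrow> (nat \<Rightarrow> nat \<Rightarrow> real^'k^'k) \<Rightarrow> (nat \<Rightarrow> real^'k) \<Rightarrow> (nat \<Rightarrow> real^'k)" where
  "bmat_apply n B x = (\<lambda>i. \<Sum>j<n. B i j *v x j)"

definition op_norm :: "nat \<Rightarrow> (nat \<Rightarrow> nat \<Rightarrow> real^'k^'k) \<Rightarrow> real" where
  "op_norm n B = (SUP x\<in>{x. bvec_norm n x \<le> 1}. bvec_norm n (bmat_apply n B x))"

text \<open>L(W,G) = D^{-1} S, blocks w_ij G_ij / (sum_{l \<noteq> i} w_il).\<close>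
definition Lmat :: "nat \<Rightarrow> (nat \<Rightarrow> nat \<Rightarrow> real) \<Rightarrow> (nat \<Rightarrow> nat \<Rightarrow> real^'k^'k) \<Rightarrow> nat \<Rightarrow> nat \<Rightarrow> real^'k^'k" where
  "Lmat n W G i j = (W i j / (\<Sum>l\<in>{..<n} - {i}. W i l)) *\<^sub>R G i j"

definition L0mat :: "nat \<Rightarrow> (nat \<Rightarrow> nat \<Rightarrow> real) \<Rightarrow> (nat \<Rightarrow> nat \<Rightarrow> real^'k^'k) \<Rightarrow> nat \<Rightarrow> nat \<Rightarrow> real^'k^'k" where
  "L0mat n W G = Lmat n (\<lambda>i j. if i = j then 0 else W i j) G"

text \<open>o_P(1): convergence to 0 in (outer) probability, n \<rightarrow> \<infinity>. Formulated with
  measurable covering events, so that no measurability of X n is presupposed;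
  for measurable X n it is ordinary convergence in probability.\<close>
definition oP1 :: "'a measure \<Rightarrow> (nat \<Rightarrow> 'a \<Rightarrow> real) \<Rightarrow> bool" where
  "oP1 M X \<longleftrightarrow> (\<forall>\<epsilon>>0. \<forall>\<delta>>0. eventually (\<lambda>n. \<exists>A\<in>sets M.
      measure M A < \<delta> \<and> {\<omega>\<in>space M. \<epsilon> < \<bar>X n \<omega>\<bar>} \<subseteq> A) sequentially)"

end

theory Submission imports Defs begin

lemma norm_row_sq: "(norm (x::real^'k))\<^sup>2 = (\<Sum>j\<in>UNIV. (x $ j)\<^sup>2)"
  by (simp add: norm_vec_def L2_set_def sum_nonneg)

lemma frob_alt: "frob A = sqrt (\<Sum>i\<in>UNIV. (norm (A $ i))\<^sup>2)"
  by (simp add: frob_def norm_row_sq)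

lemma frob_norm: "frob A = norm A"
  by (simp add: frob_alt norm_vec_def L2_set_def)

lemma mv_bound: "norm (A *v v) \<le> frob A * norm (v::real^'k)"
proof -
  have row: "\<bar>(A *v v)$i\<bar> \<le> norm (A$i) * norm v" for i
  proof -
    have "(A *v v)$i = A$i \<bullet> v" by (simp add: matrix_vector_mult_def inner_vec_def)
    then show ?thesis by (simp add: Cauchy_Schwarz_ineq2)
  qed
  have "norm (A *v v) = sqrt (\<Sum>i\<in>UNIV. ((A *v v)$i)\<^sup>2)" by (simp add: norm_vec_def L2_set_def)
  also have "\<dots> \<le> sqrt (\<Sum>i\<in>UNIV. (norm (A$i) * norm v)\<^sup>2)"
    apply (rule real_sqrt_le_mono, rule sum_mono)
    using row by (metis abs_ge_zero power2_abs power_mono)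
  also have "\<dots> = frob A * norm v"
    by (simp add: frob_alt power_mult_distrib sum_distrib_right[symmetric] real_sqrt_mult)
  finally show ?thesis .
qed

lemma bvec_bound:
  "bvec_norm n (bmat_apply n B x) \<le> sqrt (\<Sum>i<n. \<Sum>j<n. (frob (B i j))\<^sup>2) * bvec_norm n x"
proof -
  have ri: "(norm (bmat_apply n B x i))\<^sup>2 \<le> (\<Sum>j<n. (frob (B i j))\<^sup>2) * (\<Sum>j<n. (norm (x j))\<^sup>2)" for i
  proof -
    have "norm (bmat_apply n B x i) \<le> (\<Sum>j<n. norm (B i j *v x j))"
      unfolding bmat_apply_def by (rule norm_sum)
    also have "\<dots> \<le> (\<Sum>j<n. \<bar>frob (B i j)\<bar> * \<bar>norm (x j)\<bar>)"
      apply (rule sum_mono) using mv_bound by (simp add: frob_norm)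
    also have "\<dots> \<le> L2_set (\<lambda>j. frob (B i j)) {..<n} * L2_set (\<lambda>j. norm (x j)) {..<n}"
      by (rule L2_set_mult_ineq)
    finally have h: "norm (bmat_apply n B x i) \<le> L2_set (\<lambda>j. frob (B i j)) {..<n} * L2_set (\<lambda>j. norm (x j)) {..<n}" .
    have "(norm (bmat_apply n B x i))\<^sup>2 \<le> (L2_set (\<lambda>j. frob (B i j)) {..<n} * L2_set (\<lambda>j. norm (x j)) {..<n})\<^sup>2"
      using h by (simp add: power_mono)
    also have "\<dots> = (\<Sum>j<n. (frob (B i j))\<^sup>2) * (\<Sum>j<n. (norm (x j))\<^sup>2)"
      by (simp add: power_mult_distrib L2_set_def sum_nonneg)
    finally show ?thesis .
  qed
  have "bvec_norm n (bmat_apply n B x) \<le> sqrt (\<Sum>i<n. (\<Sum>j<n. (frob (B i j))\<^sup>2) * (\<Sum>j<n. (norm (x j))\<^sup>2))"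
    unfolding bvec_norm_def by (rule real_sqrt_le_mono, rule sum_mono, rule ri)
  also have "\<dots> = sqrt (\<Sum>i<n. \<Sum>j<n. (frob (B i j))\<^sup>2) * bvec_norm n x"
    by (simp add: bvec_norm_def sum_distrib_right[symmetric] real_sqrt_mult)
  finally show ?thesis .
qed

lemma op_norm_bound:
  "\<bar>op_norm n B\<bar> \<le> sqrt (\<Sum>i<n. \<Sum>j<n. (frob (B i j))\<^sup>2)"
proof -
  let ?F = "sqrt (\<Sum>i<n. \<Sum>j<n. (frob (B i j))\<^sup>2)"
  have F0: "?F \<ge> 0" by (simp add: sum_nonneg)
  have b: "bvec_norm n (bmat_apply n B x) \<le> ?F" if "x \<in> {x. bvec_norm n x \<le> 1}" for x
  proof -
    have "bvec_norm n (bmat_apply n B x) \<le> ?F * bvec_norm n x" by (rule bvec_bound)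
    also have "\<dots> \<le> ?F * 1" using that F0 by (intro mult_left_mono) auto
    finally show ?thesis by simp
  qed
  have z: "(\<lambda>_. 0::real^'a) \<in> {x. bvec_norm n x \<le> 1}" by (simp add: bvec_norm_def)
  have ne: "{x. bvec_norm n x \<le> (1::real)} \<noteq> ({} :: (nat \<Rightarrow> real^'a) set)" using z by blast
  have up: "op_norm n B \<le> ?F" unfolding op_norm_def by (rule cSUP_least[OF ne b])
  have bdd: "bdd_above ((\<lambda>x. bvec_norm n (bmat_apply n B x)) ` {x. bvec_norm n x \<le> 1})"
    using b by (intro bdd_aboveI2) 
  have "0 \<le> bvec_norm n (bmat_apply n B (\<lambda>_. 0))" by (simp add: bvec_norm_def sum_nonneg)
  also have "\<dots> \<le> op_norm n B" unfolding op_norm_def by (rule cSUP_upper[OF z bdd])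
  finally show ?thesis using up by simp
qed

lemma frob_scale: "frob (a *\<^sub>R A) = \<bar>a\<bar> * frob A"
  by (simp add: frob_norm)

lemma block_bound:
  fixes W Wt r :: "nat \<Rightarrow> nat \<Rightarrow> real" and G Gt :: "nat \<Rightarrow> nat \<Rightarrow> real^'k^'k"
  assumes W01: "\<forall>i j. 0 \<le> W i j \<and> W i j \<le> 1"
    and Dpos: "\<forall>i<n. (1/real n) * (\<Sum>l\<in>{..<n}-{i}. W i l) > \<gamma>" and g0: "\<gamma> > 0"
    and fac: "\<forall>i<n. \<forall>j<n. i \<noteq> j \<longrightarrow> Wt i j = c * W i j * r i j \<and> 1/R \<le> r i j \<and> r i j \<le> R"
    and c0: "c > 0" and R1: "R \<ge> 1" and t0: "t \<ge> 0" and C0: "C \<ge> 0"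
    and Gb: "\<forall>i<n. \<forall>j<n. frob (G i j) \<le> C \<and> frob (Gt i j - G i j) \<le> t"
    and ij: "i < n" "j < n"
  shows "(frob (Lmat n W G i j - L0mat n Wt Gt i j))\<^sup>2
     \<le> (((R\<^sup>2-1)*C + R\<^sup>2*t)/(n*\<gamma>))\<^sup>2 + (if i = j then (C/(n*\<gamma>))\<^sup>2 else 0)"
proof -
  define K where "K = (R\<^sup>2-1)*C + R\<^sup>2*t"
  have K0: "K \<ge> 0" unfolding K_def using R1 t0 C0
    by (metis add_nonneg_nonneg diff_ge_0_iff_ge mult_nonneg_nonneg one_le_power zero_le_power2)
  define D where "D = (\<Sum>l\<in>{..<n}-{i}. W i l)"
  have n0: "real n > 0" using ij by simp
  have Dg: "D > n * \<gamma>" using Dpos ij unfolding D_def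
    by (simp add: field_simps)
  have ng: "n * \<gamma> > 0" using n0 g0 by simp
  have D0: "D > 0" using Dg ng by linarith
  define p where "p = W i j / D"
  have p0: "p \<ge> 0" unfolding p_def using W01 D0 by simp
  have pb: "p \<le> 1/(n*\<gamma>)"
  proof -
    have "p \<le> 1 / D" unfolding p_def using W01 D0 by (simp add: divide_right_mono)
    also have "\<dots> \<le> 1/(n*\<gamma>)" using Dg ng by (simp add: frac_le)
    finally show ?thesis .
  qed
  have Lij: "Lmat n W G i j = p *\<^sub>R G i j" unfolding Lmat_def p_def D_def by simp
  show ?thesis
  proof (cases "i = j")
    case True
    have "L0mat n Wt Gt i j = 0" using True by (simp add: L0mat_def Lmat_def)
    then have "frob (Lmat n W G i j - L0mat n Wt Gt i j) = p * frob (G i j)"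
      using Lij p0 by (simp add: frob_scale)
    also have "\<dots> \<le> (1/(n*\<gamma>)) * C" using pb p0 Gb ij C0 ng
      by (intro mult_mono) (auto simp: frob_norm)
    finally have a: "frob (Lmat n W G i j - L0mat n Wt Gt i j) \<le> C/(n*\<gamma>)" by simp
    have "(frob (Lmat n W G i j - L0mat n Wt Gt i j))\<^sup>2 \<le> (C/(n*\<gamma>))\<^sup>2"
      using a by (simp add: frob_norm power_mono)
    moreover have "0 \<le> (K/(n*\<gamma>))\<^sup>2" by simp
    ultimately have "(frob (Lmat n W G i j - L0mat n Wt Gt i j))\<^sup>2 \<le> (K/(n*\<gamma>))\<^sup>2 + (C/(n*\<gamma>))\<^sup>2"
      by linarith
    then show ?thesis using True unfolding K_def by simp
  next
    case False
    define T where "T = (\<Sum>l\<in>{..<n}-{i}. W i l * r i l)"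
    have S: "(\<Sum>l\<in>{..<n}-{i}. (if i = l then 0 else Wt i l)) = c * T"
      unfolding T_def sum_distrib_left
      apply (rule sum.cong, simp) using fac ij by (auto simp: mult.assoc)
    have R0: "R > 0" using R1 by simp
    have Tlo: "T \<ge> D / R"
    proof -
      have "D / R = (\<Sum>l\<in>{..<n}-{i}. W i l * (1/R))" unfolding D_def
        by (simp add: sum_divide_distrib)
      also have "\<dots> \<le> T" unfolding T_def
      proof (rule sum_mono)
        fix l assume "l \<in> {..<n}-{i}"
        then have "1/R \<le> r i l" "0 \<le> W i l" using fac ij W01 by auto
        then show "W i l * (1/R) \<le> W i l * r i l" by (rule mult_left_mono)
      qed
      finally show ?thesis .
    qed
    have Thi: "T \<le> D * R"
    proof -
      have "T \<le> (\<Sum>l\<in>{..<n}-{i}. W i l * R)" unfolding T_def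
        apply (rule sum_mono) using fac ij W01 by (auto intro: mult_left_mono)
      also have "\<dots> = D * R" unfolding D_def by (simp add: sum_distrib_right)
      finally show ?thesis .
    qed
    have DR0: "D / R > 0" using D0 R0 by simp
    have T0: "T > 0" using Tlo DR0 by linarith
    define q where "q = W i j * r i j / T"
    have L0ij: "L0mat n Wt Gt i j = q *\<^sub>R Gt i j"
      unfolding L0mat_def Lmat_def q_def using False S fac ij c0 by simp
    have rb: "1/R \<le> r i j" "r i j \<le> R" using fac ij False by auto
    have Wij: "0 \<le> W i j" using W01 by simp
    have qhi: "q \<le> R\<^sup>2 * p"
    proof -
      have "q \<le> W i j * R / (D / R)" unfolding q_def
        by (rule frac_le) (use Wij rb R0 DR0 Tlo in \<open>auto intro: mult_left_mono\<close>)
      also have "\<dots> = R\<^sup>2 * p" unfolding p_def using R0 D0 by (simp add: field_simps power2_eq_square)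
      finally show ?thesis .
    qed
    have qlo: "p / R\<^sup>2 \<le> q"
    proof -
      have wr: "W i j * (1/R) \<le> W i j * r i j" by (rule mult_left_mono[OF rb(1) Wij])
      have r0: "r i j \<ge> 0" proof -
        have "1/R > 0" using R0 by simp
        then show ?thesis using rb(1) by linarith
      qed
      have wr0: "0 \<le> W i j * r i j" using r0 Wij by simp
      have "p / R\<^sup>2 = W i j * (1/R) / (D * R)" unfolding p_def using R0 D0 by (simp add: field_simps power2_eq_square)
      also have "\<dots> \<le> q" unfolding q_def
        by (rule frac_le) (use wr wr0 R0 T0 Thi in \<open>auto\<close>)
      finally show ?thesis .
    qed
    have R2: "R\<^sup>2 \<ge> 1" using R1 by (simp add: one_le_power)
    have pq: "\<bar>p - q\<bar> \<le> (R\<^sup>2 - 1) * p"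
    proof -
      have "p - p / R\<^sup>2 \<le> (R\<^sup>2 - 1) * p"
      proof -
        have "p / R\<^sup>2 \<ge> 0" using p0 by simp
        have "p - p / R\<^sup>2 = (R\<^sup>2 - 1) * (p / R\<^sup>2)" using R0 by (simp add: field_simps)
        also have "\<dots> \<le> (R\<^sup>2 - 1) * p"
        proof (rule mult_left_mono)
          have "p * 1 \<le> p * R\<^sup>2" by (rule mult_left_mono[OF R2 p0])
          then show "p / R\<^sup>2 \<le> p" using R0 by (simp add: divide_le_eq)
        qed (use R2 in simp)
        finally show ?thesis .
      qed
      then show ?thesis using qhi qlo by (auto simp: algebra_simps)
    qed
    have q0: "q \<ge> 0"
    proof -
      have "p / R\<^sup>2 \<ge> 0" using p0 by simp
      then show ?thesis using qlo by linarith
    qed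
    have "Lmat n W G i j - L0mat n Wt Gt i j = (p - q) *\<^sub>R G i j + q *\<^sub>R (G i j - Gt i j)"
      using Lij L0ij by (simp add: algebra_simps)
    then have "frob (Lmat n W G i j - L0mat n Wt Gt i j) \<le> \<bar>p - q\<bar> * frob (G i j) + q * frob (Gt i j - G i j)"
      using q0 by (simp add: frob_norm norm_triangle_le norm_minus_commute)
    also have "\<dots> \<le> (R\<^sup>2 - 1) * p * C + R\<^sup>2 * p * t"
      using pq qhi Gb ij q0 t0 p0 R2 by (intro add_mono mult_mono) (auto simp: frob_norm)
    also have "\<dots> = p * K" unfolding K_def by (simp add: algebra_simps)
    also have "\<dots> \<le> K / (n*\<gamma>)" using pb K0 by (metis mult.commute mult_left_mono times_divide_eq_right mult.right_neutral)
    finally have a: "frob (Lmat n W G i j - L0mat n Wt Gt i j) \<le> K / (n*\<gamma>)" .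
    have "(frob (Lmat n W G i j - L0mat n Wt Gt i j))\<^sup>2 \<le> (K/(n*\<gamma>))\<^sup>2"
      using a by (simp add: frob_norm power_mono)
    then show ?thesis using False by (simp add: K_def)
  qed
qed

lemma det_bound:
  fixes W Wt r :: "nat \<Rightarrow> nat \<Rightarrow> real" and G Gt :: "nat \<Rightarrow> nat \<Rightarrow> real^'k^'k"
  assumes W01: "\<forall>i j. 0 \<le> W i j \<and> W i j \<le> 1"
    and Dpos: "\<forall>i<n. (1/real n) * (\<Sum>l\<in>{..<n}-{i}. W i l) > \<gamma>" and g0: "\<gamma> > 0"
    and fac: "\<forall>i<n. \<forall>j<n. i \<noteq> j \<longrightarrow> Wt i j = c * W i j * r i j \<and> 1/R \<le> r i j \<and> r i j \<le> R"
    and c0: "c > 0" and R1: "R \<ge> 1" and t0: "t \<ge> 0" and C0: "C \<ge> 0"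
    and Gb: "\<forall>i<n. \<forall>j<n. frob (G i j) \<le> C \<and> frob (Gt i j - G i j) \<le> t"
    and n0: "n > 0"
  shows "\<bar>op_norm n (\<lambda>i j. Lmat n W G i j - L0mat n Wt Gt i j)\<bar>
     \<le> sqrt ((((R\<^sup>2-1)*C + R\<^sup>2*t)/\<gamma>)\<^sup>2 + C\<^sup>2/(n*\<gamma>\<^sup>2))"
proof -
  define a where "a = (((R\<^sup>2-1)*C + R\<^sup>2*t)/(n*\<gamma>))\<^sup>2"
  define b where "b = (C/(n*\<gamma>))\<^sup>2"
  have "\<bar>op_norm n (\<lambda>i j. Lmat n W G i j - L0mat n Wt Gt i j)\<bar>
     \<le> sqrt (\<Sum>i<n. \<Sum>j<n. (frob (Lmat n W G i j - L0mat n Wt Gt i j))\<^sup>2)"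
    by (rule op_norm_bound)
  also have "\<dots> \<le> sqrt (\<Sum>i<n. \<Sum>j<n. (a + (if i = j then b else 0)))"
    unfolding a_def b_def
    apply (rule real_sqrt_le_mono, rule sum_mono, rule sum_mono)
    by (rule block_bound[OF W01 Dpos g0 fac c0 R1 t0 C0 Gb]) auto
  also have "(\<Sum>i<n. \<Sum>j<n. (a + (if i = j then b else 0))) = real n * (real n * a + b)"
    by (simp add: sum.distrib)
  also have "real n * (real n * a + b) = (((R\<^sup>2-1)*C + R\<^sup>2*t)/\<gamma>)\<^sup>2 + C\<^sup>2/(n*\<gamma>\<^sup>2)"
    unfolding a_def b_def using n0 g0 by (simp add: field_simps power2_eq_square)
  finally show ?thesis .
qed

theorem proposition2p4:
  fixes M :: "'a measure"
    and d_noisy d_clean :: "nat \<Rightarrow> 'a \<Rightarrow> nat \<Rightarrow> nat \<Rightarrow> real"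
    and \<xi> :: "nat \<Rightarrow> real"
    and \<nu> :: real
    and G Gt :: "nat \<Rightarrow> 'a \<Rightarrow> nat \<Rightarrow> nat \<Rightarrow> real^'k^'k"
  assumes "prob_space M"
    and "\<nu> > 0"
    and "\<And>n \<omega> i j. d_noisy n \<omega> i j \<ge> 0"
    and "\<And>n \<omega> i j. d_clean n \<omega> i j \<ge> 0"
    and "oP1 M (\<lambda>n \<omega>. SUP p\<in>{(i, j). i < n \<and> j < n \<and> i \<noteq> j}.
           \<bar>(d_noisy n \<omega> (fst p) (snd p))\<^sup>2 - (d_clean n \<omega> (fst p) (snd p))\<^sup>2 - \<xi> n\<bar>)"
    and "\<exists>C>0. \<forall>n. \<forall>\<omega>\<in>space M. \<forall>i<n. \<forall>j<n.
           frob (G n \<omega> i j) \<le> C \<and> frob (Gt n \<omega> i j) \<le> C"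
    and "oP1 M (\<lambda>n \<omega>. SUP p\<in>{(i, j). i < n \<and> j < n}.
           frob (Gt n \<omega> (fst p) (snd p) - G n \<omega> (fst p) (snd p)))"
    and "\<exists>\<gamma>>0. eventually (\<lambda>n. \<forall>\<omega>\<in>space M. \<forall>i<n.
           (1 / real n) * (\<Sum>j\<in>{..<n} - {i}. exp (- (d_clean n \<omega> i j)\<^sup>2 / \<nu>)) > \<gamma>) sequentially"
  shows "oP1 M (\<lambda>n \<omega>. op_norm n (\<lambda>i j.
           Lmat n (\<lambda>i j. exp (- (d_clean n \<omega> i j)\<^sup>2 / \<nu>)) (G n \<omega>) i j
         - L0mat n (\<lambda>i j. exp (- (d_noisy n \<omega> i j)\<^sup>2 / \<nu>)) (Gt n \<omega>) i j))"
proof -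
  note A = assms
  let ?W = "\<lambda>n \<omega> i j. exp (- (d_clean n \<omega> i j)\<^sup>2 / \<nu>)"
  let ?Wt = "\<lambda>n \<omega> i j. exp (- (d_noisy n \<omega> i j)\<^sup>2 / \<nu>)"
  let ?X = "\<lambda>n \<omega>. op_norm n (\<lambda>i j. Lmat n (?W n \<omega>) (G n \<omega>) i j - L0mat n (?Wt n \<omega>) (Gt n \<omega>) i j)"
  let ?E = "\<lambda>n \<omega>. SUP p\<in>{(i, j). i < n \<and> j < n \<and> i \<noteq> j}.
           \<bar>(d_noisy n \<omega> (fst p) (snd p))\<^sup>2 - (d_clean n \<omega> (fst p) (snd p))\<^sup>2 - \<xi> n\<bar>"
  let ?F = "\<lambda>n \<omega>. SUP p\<in>{(i, j). i < n \<and> j < n}.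
           frob (Gt n \<omega> (fst p) (snd p) - G n \<omega> (fst p) (snd p))"
  have nu: "\<nu> > 0" by (rule A(2))
  obtain C where C0: "C > 0" and Cb: "\<forall>n. \<forall>\<omega>\<in>space M. \<forall>i<n. \<forall>j<n.
           frob (G n \<omega> i j) \<le> C \<and> frob (Gt n \<omega> i j) \<le> C" using A(6) by blast
  obtain \<gamma> where g0: "\<gamma> > 0" and Eg: "eventually (\<lambda>n. \<forall>\<omega>\<in>space M. \<forall>i<n.
           (1 / real n) * (\<Sum>j\<in>{..<n} - {i}. exp (- (d_clean n \<omega> i j)\<^sup>2 / \<nu>)) > \<gamma>) sequentially"
    using A(8) by blast
  have fm: "finite_measure M" using A(1) by (simp add: prob_space.finite_measure)
  show ?thesis unfolding oP1_def
  proof (intro allI impI)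
    fix \<epsilon> \<delta> :: real assume e0: "\<epsilon> > 0" and d0: "\<delta> > 0"
    define K where "K = (\<lambda>t. ((exp (t/\<nu>))\<^sup>2 - 1) * C + (exp (t/\<nu>))\<^sup>2 * t)"
    have "(K \<longlongrightarrow> ((exp (0/\<nu>))\<^sup>2 - 1) * C + (exp (0/\<nu>))\<^sup>2 * 0) (at_right 0)"
      unfolding K_def using nu by (intro tendsto_intros) auto
    then have "(K \<longlongrightarrow> 0) (at_right 0)" by simp
    moreover have "\<gamma> * \<epsilon> / 2 > 0" using g0 e0 by simp
    ultimately have "eventually (\<lambda>t. K t < \<gamma> * \<epsilon> / 2) (at_right 0)"
      by (rule order_tendstoD(2))
    then obtain b where b0: "b > 0" and bb: "\<And>t. t > 0 \<Longrightarrow> t < b \<Longrightarrow> K t < \<gamma> * \<epsilon> / 2"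
      unfolding eventually_at_right_field by auto
    define t where "t = b / 2"
    have t0: "t > 0" and Kt: "K t < \<gamma> * \<epsilon> / 2" using b0 bb[of t] unfolding t_def by auto
    define R where "R = exp (t/\<nu>)"
    have R1: "R \<ge> 1" unfolding R_def using t0 nu by simp
    have K0: "K t \<ge> 0" unfolding K_def using t0 C0
      by (smt (verit, best) one_le_exp_iff R1 R_def mult_nonneg_nonneg one_le_power zero_le_power2 divide_nonneg_pos nu)
    have Kg: "(K t / \<gamma>)\<^sup>2 < \<epsilon>\<^sup>2 / 4"
    proof -
      have "K t / \<gamma> < \<epsilon> / 2" using Kt g0 by (simp add: field_simps)
      moreover have "K t / \<gamma> \<ge> 0" using K0 g0 by simp
      ultimately have "(K t / \<gamma>)\<^sup>2 < (\<epsilon> / 2)\<^sup>2" by (simp add: power_strict_mono)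
      then show ?thesis by (simp add: power_divide)
    qed
    have "((\<lambda>n. C\<^sup>2 / \<gamma>\<^sup>2 / real n) \<longlongrightarrow> 0) sequentially"
      by (intro tendsto_divide_0[OF tendsto_const] filterlim_at_top_imp_at_infinity filterlim_real_sequentially)
    moreover have "\<epsilon>\<^sup>2 / 4 > 0" using e0 by simp
    ultimately have En: "eventually (\<lambda>n. C\<^sup>2 / \<gamma>\<^sup>2 / real n < \<epsilon>\<^sup>2 / 4) sequentially"
      by (rule order_tendstoD(2))
    have "\<delta> / 2 > 0" using d0 by simp
    then have E1: "eventually (\<lambda>n. \<exists>A\<in>sets M. measure M A < \<delta>/2 \<and> {\<omega>\<in>space M. t < \<bar>?E n \<omega>\<bar>} \<subseteq> A) sequentially"
      and E2: "eventually (\<lambda>n. \<exists>A\<in>sets M. measure M A < \<delta>/2 \<and> {\<omega>\<in>space M. t < \<bar>?F n \<omega>\<bar>} \<subseteq> A) sequentially"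
      using A(5) A(7) t0 unfolding oP1_def by blast+
    have E3: "eventually (\<lambda>n. n \<ge> 1) sequentially" by (rule eventually_ge_at_top)
    show "eventually (\<lambda>n. \<exists>A\<in>sets M. measure M A < \<delta> \<and> {\<omega>\<in>space M. \<epsilon> < \<bar>?X n \<omega>\<bar>} \<subseteq> A) sequentially"
      using E1 E2 E3 En Eg
    proof eventually_elim
      case (elim n)
      from elim(1) obtain A1 where A1: "A1 \<in> sets M" "measure M A1 < \<delta>/2" "{\<omega>\<in>space M. t < \<bar>?E n \<omega>\<bar>} \<subseteq> A1" by blast
      from elim(2) obtain A2 where A2: "A2 \<in> sets M" "measure M A2 < \<delta>/2" "{\<omega>\<in>space M. t < \<bar>?F n \<omega>\<bar>} \<subseteq> A2" by blast
      have n0: "n > 0" using elim(3) by simp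
      have sub: "{\<omega>\<in>space M. \<epsilon> < \<bar>?X n \<omega>\<bar>} \<subseteq> A1 \<union> A2"
      proof
        fix \<omega> assume w: "\<omega> \<in> {\<omega>\<in>space M. \<epsilon> < \<bar>?X n \<omega>\<bar>}"
        show "\<omega> \<in> A1 \<union> A2"
        proof (rule ccontr)
          assume "\<omega> \<notin> A1 \<union> A2"
          then have Et: "\<bar>?E n \<omega>\<bar> \<le> t" and Ft: "\<bar>?F n \<omega>\<bar> \<le> t" using A1(3) A2(3) w by auto
          have wS: "\<omega> \<in> space M" using w by simp
          have fin1: "finite {(i, j). i < n \<and> j < n \<and> i \<noteq> j}"
            by (rule finite_subset[of _ "{..<n} \<times> {..<n}"]) auto
          have fin2: "finite {(i, j). i < n \<and> j < n}"
            by (rule finite_subset[of _ "{..<n} \<times> {..<n}"]) auto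
          have ebound: "\<bar>(d_noisy n \<omega> i j)\<^sup>2 - (d_clean n \<omega> i j)\<^sup>2 - \<xi> n\<bar> \<le> t"
            if "i < n" "j < n" "i \<noteq> j" for i j
          proof -
            have mem: "(i,j) \<in> {(i, j). i < n \<and> j < n \<and> i \<noteq> j}" using that by simp
            have "(\<lambda>p. \<bar>(d_noisy n \<omega> (fst p) (snd p))\<^sup>2 - (d_clean n \<omega> (fst p) (snd p))\<^sup>2 - \<xi> n\<bar>) (i,j) \<le> ?E n \<omega>"
              by (rule cSUP_upper[OF mem bdd_above_finite[OF finite_imageI[OF fin1]]])
            then have "\<bar>(d_noisy n \<omega> i j)\<^sup>2 - (d_clean n \<omega> i j)\<^sup>2 - \<xi> n\<bar> \<le> ?E n \<omega>" by simp
            then show ?thesis using Et by linarith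
          qed
          have fbound: "frob (Gt n \<omega> i j - G n \<omega> i j) \<le> t"
            if "i < n" "j < n" for i j
          proof -
            have mem: "(i,j) \<in> {(i, j). i < n \<and> j < n}" using that by simp
            have "(\<lambda>p. frob (Gt n \<omega> (fst p) (snd p) - G n \<omega> (fst p) (snd p))) (i,j) \<le> ?F n \<omega>"
              by (rule cSUP_upper[OF mem bdd_above_finite[OF finite_imageI[OF fin2]]])
            then have "frob (Gt n \<omega> i j - G n \<omega> i j) \<le> ?F n \<omega>" by simp
            then show ?thesis using Ft by linarith
          qed
          define r where "r = (\<lambda>i j. exp (- ((d_noisy n \<omega> i j)\<^sup>2 - (d_clean n \<omega> i j)\<^sup>2 - \<xi> n) / \<nu>))"
          define c where "c = exp (- \<xi> n / \<nu>)"
          have W01: "\<forall>i j. 0 \<le> ?W n \<omega> i j \<and> ?W n \<omega> i j \<le> 1"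
            using nu by (auto simp: divide_nonpos_pos)
          have fac: "\<forall>i<n. \<forall>j<n. i \<noteq> j \<longrightarrow> ?Wt n \<omega> i j = c * ?W n \<omega> i j * r i j \<and> 1/R \<le> r i j \<and> r i j \<le> R"
          proof (intro allI impI)
            fix i j assume ij: "i < n" "j < n" "i \<noteq> j"
            have eb: "\<bar>(d_noisy n \<omega> i j)\<^sup>2 - (d_clean n \<omega> i j)\<^sup>2 - \<xi> n\<bar> \<le> t" using ebound ij by blast
            have "c * ?W n \<omega> i j * r i j = exp (- \<xi> n / \<nu> + - (d_clean n \<omega> i j)\<^sup>2 / \<nu>
               + - ((d_noisy n \<omega> i j)\<^sup>2 - (d_clean n \<omega> i j)\<^sup>2 - \<xi> n) / \<nu>)"
              unfolding c_def r_def by (simp only: mult_exp_exp)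
            also have "\<dots> = ?Wt n \<omega> i j" using nu by (simp add: field_simps)
            finally have 1: "?Wt n \<omega> i j = c * ?W n \<omega> i j * r i j" by simp
            define e where "e = (d_noisy n \<omega> i j)\<^sup>2 - (d_clean n \<omega> i j)\<^sup>2 - \<xi> n"
            have re: "r i j = exp (- e / \<nu>)" unfolding r_def e_def by simp
            have ebe: "\<bar>e\<bar> \<le> t" using eb unfolding e_def .
            have l1: "-t/\<nu> \<le> -e/\<nu>" using ebe nu by (intro divide_right_mono) auto
            have l2: "-e/\<nu> \<le> t/\<nu>" using ebe nu by (intro divide_right_mono) auto
            have iR: "1/R = exp (-t/\<nu>)" unfolding R_def by (simp add: exp_minus inverse_eq_divide)
            have 2: "1/R \<le> r i j" unfolding iR re using l1 by simp
            have 3: "r i j \<le> R" unfolding R_def re using l2 by simp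
            show "?Wt n \<omega> i j = c * ?W n \<omega> i j * r i j \<and> 1/R \<le> r i j \<and> r i j \<le> R" using 1 2 3 by blast
          qed
          have Gb: "\<forall>i<n. \<forall>j<n. frob (G n \<omega> i j) \<le> C \<and> frob (Gt n \<omega> i j - G n \<omega> i j) \<le> t"
            using Cb wS fbound by blast
          have Dpos: "\<forall>i<n. (1/real n) * (\<Sum>l\<in>{..<n}-{i}. ?W n \<omega> i l) > \<gamma>" using elim(5) wS by blast
          have "\<bar>?X n \<omega>\<bar> \<le> sqrt ((((R\<^sup>2-1)*C + R\<^sup>2*t)/\<gamma>)\<^sup>2 + C\<^sup>2/(n*\<gamma>\<^sup>2))"
            by (rule det_bound[OF W01 Dpos g0 fac _ R1 _ _ Gb n0]) (use t0 C0 in \<open>auto simp: c_def\<close>)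
          also have "\<dots> < sqrt (\<epsilon>\<^sup>2)"
          proof (rule real_sqrt_less_mono)
            have "((R\<^sup>2-1)*C + R\<^sup>2*t) = K t" unfolding K_def R_def by simp
            moreover have "C\<^sup>2/(n*\<gamma>\<^sup>2) = C\<^sup>2 / \<gamma>\<^sup>2 / real n" by simp
            moreover have "\<epsilon>\<^sup>2 / 4 + \<epsilon>\<^sup>2 / 4 < \<epsilon>\<^sup>2" using e0 by simp
            ultimately show "(((R\<^sup>2-1)*C + R\<^sup>2*t)/\<gamma>)\<^sup>2 + C\<^sup>2/(n*\<gamma>\<^sup>2) < \<epsilon>\<^sup>2"
              using Kg elim(4) by (simp only:)
          qed
          also have "\<dots> = \<epsilon>" using e0 by simp
          finally show False using w by simp
        qed
      qed
      have "measure M (A1 \<union> A2) \<le> measure M A1 + measure M A2"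
        using A1(1) A2(1) by (rule measure_Un_le)
      then have "measure M (A1 \<union> A2) < \<delta>" using A1(2) A2(2) by simp
      then show ?case using sub A1(1) A2(1) by blast
    qed
  qed
qed

end
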